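(* Let $\alpha_0=\arctan \sqrt{q/p}$. The stationary points, in the region $R=R_1\cup R_2$ of the $(\vartheta,\alpha)$-plane, of the first order differential system \[ \dot{\vartheta}=3\,\sin \vartheta \, \cos \vartheta \, \sin (\alpha-\vartheta), \qquad \dot{\alpha}=q\,\cos \alpha \, \cos \vartheta \,-\, p\,\sin \alpha \, \sin \vartheta \] are exactly \[ P_0=(\alpha_0,\alpha_0),\quad P_1=(\alpha_0,\alpha_0+\pi),\quad Q_1=\left(0,\tfrac{\pi}{2}\right),\quad Q_2=\left(0,\tfrac{3\pi}{2}\right),\quad Q_3=\left(\tfrac{\pi}{2},0\right),\quad Q_4=\left(\tfrac{\pi}{2},\pi\right). \] Moreover, $P_0$ is a spiral sink if $p+q\leq 17$, while it is a nodal sink if $p+q\geq 18$; $P_1$ is a spiral source if $p+q\leq 17$, while it is a nodal source if $p+q\geq 18$; the points $Q_1,Q_2,Q_3,Q_4$ are saddle points.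
   Context: Here $p,q$ are positive integers (the dimensions of the spheres in $SO(p+1)\times SO(q+1)$-invariant hypersurfaces ${\mathbb S}^p\times{\mathbb S}^q\times(a,b)\to{\mathbb R}^{p+1}\times{\mathbb R}^{q+1}$, $(w,z,s)\mapsto(x(s)w,y(s)z)$, with profile curve $(x(s),y(s))$ parametrized by arc length, $\alpha$ the angle of the profile curve with the $x$-axis, and $\vartheta$ the polar angle, $x=r\cos\vartheta$, $y=r\sin\vartheta$). The system above is the one whose trajectories correspond to biconservative profile curves, i.e. solutions of $3\dot\alpha+p\frac{\sin\alpha}{x}-q\frac{\cos\alpha}{y}=0$. The regions are $R_1=\{(\vartheta,\alpha): 0\le\vartheta\le\pi/2,\ \vartheta-\pi/2\le\alpha\le\vartheta+\pi/2\}$ and $R_2=\{(\vartheta,\alpha): 0\le\vartheta\le\pi/2,\ \vartheta+\pi/2\le\alpha\le\vartheta+3\pi/2\}$. *)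

theory Defs
  imports "HOL-Analysis.Analysis"
begin

definition thdot :: "real \<Rightarrow> real \<Rightarrow> real" where
  "thdot th al = 3 * sin th * cos th * sin (al - th)"

definition aldot :: "real \<Rightarrow> real \<Rightarrow> real \<Rightarrow> real \<Rightarrow> real" where
  "aldot p q th al = q * cos al * cos th - p * sin al * sin th"

definition R1 :: "(real \<times> real) set" where
  "R1 = {(th, al). 0 \<le> th \<and> th \<le> pi/2 \<and> th - pi/2 \<le> al \<and> al \<le> th + pi/2}"

definition R2 :: "(real \<times> real) set" where
  "R2 = {(th, al). 0 \<le> th \<and> th \<le> pi/2 \<and> th + pi/2 \<le> al \<and> al \<le> th + 3*pi/2}"

definition stationary :: "(real \<Rightarrow> real \<Rightarrow> real) \<Rightarrow> (real \<Rightarrow> real \<Rightarrow> real) \<Rightarrow> real \<times> real \<Rightarrow> bool" where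
  "stationary f g P \<longleftrightarrow> f (fst P) (snd P) = 0 \<and> g (fst P) (snd P) = 0"

definition jac_eigenvalues ::
  "(real \<Rightarrow> real \<Rightarrow> real) \<Rightarrow> (real \<Rightarrow> real \<Rightarrow> real) \<Rightarrow> real \<times> real \<Rightarrow> complex set" where
  "jac_eigenvalues f g P =
    (let a = deriv (\<lambda>t. f t (snd P)) (fst P);
         b = deriv (\<lambda>t. f (fst P) t) (snd P);
         c = deriv (\<lambda>t. g t (snd P)) (fst P);
         d = deriv (\<lambda>t. g (fst P) t) (snd P)
     in {z. (complex_of_real a - z) * (complex_of_real d - z) - complex_of_real (b * c) = 0})"

definition spiral_sink where
  "spiral_sink f g P \<longleftrightarrow> stationary f g P \<and>
     (\<forall>z\<in>jac_eigenvalues f g P. Im z \<noteq> 0 \<and> Re z < 0)"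

definition nodal_sink where
  "nodal_sink f g P \<longleftrightarrow> stationary f g P \<and>
     (\<forall>z\<in>jac_eigenvalues f g P. Im z = 0 \<and> Re z < 0)"

definition spiral_source where
  "spiral_source f g P \<longleftrightarrow> stationary f g P \<and>
     (\<forall>z\<in>jac_eigenvalues f g P. Im z \<noteq> 0 \<and> Re z > 0)"

definition nodal_source where
  "nodal_source f g P \<longleftrightarrow> stationary f g P \<and>
     (\<forall>z\<in>jac_eigenvalues f g P. Im z = 0 \<and> Re z > 0)"

definition saddle_point where
  "saddle_point f g P \<longleftrightarrow> stationary f g P \<and>
     (\<forall>z\<in>jac_eigenvalues f g P. Im z = 0) \<and>
     (\<exists>z\<in>jac_eigenvalues f g P. Re z < 0) \<and> (\<exists>z\<in>jac_eigenvalues f g P. Re z > 0)"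

end

theory Submission
  imports Defs
begin

definition eigset :: "real \<Rightarrow> real \<Rightarrow> real \<Rightarrow> real \<Rightarrow> complex set" where
  "eigset a b c d = {z. (complex_of_real a - z) * (complex_of_real d - z) - complex_of_real (b * c) = 0}"

lemma d1: "deriv (\<lambda>t. thdot t al) th = 3 * cos th * cos th * sin(al-th) - 3 * sin th * sin th * sin(al-th) - 3 * sin th * cos th * cos(al-th)"
  unfolding thdot_def
  by (rule DERIV_imp_deriv, (rule derivative_eq_intros refl)+, simp add: algebra_simps)

lemma d2: "deriv (\<lambda>t. thdot th t) al = 3 * sin th * cos th * cos(al-th)"
  unfolding thdot_def
  by (rule DERIV_imp_deriv, (rule derivative_eq_intros refl)+, simp add: algebra_simps)

lemma d3: "deriv (\<lambda>t. aldot p q t al) th = - q * cos al * sin th - p * sin al * cos th"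
  unfolding aldot_def
  by (rule DERIV_imp_deriv, (rule derivative_eq_intros refl)+, simp add: algebra_simps)

lemma d4: "deriv (\<lambda>t. aldot p q th t) al = - q * sin al * cos th - p * cos al * sin th"
  unfolding aldot_def
  by (rule DERIV_imp_deriv, (rule derivative_eq_intros refl)+, simp add: algebra_simps)

lemma jac: "jac_eigenvalues thdot (aldot p q) (th, al) =
  eigset (3 * cos th * cos th * sin(al-th) - 3 * sin th * sin th * sin(al-th) - 3 * sin th * cos th * cos(al-th))
         (3 * sin th * cos th * cos(al-th)) (- q * cos al * sin th - p * sin al * cos th) (- q * sin al * cos th - p * cos al * sin th)"
  unfolding jac_eigenvalues_def eigset_def Let_def by (simp only: fst_conv snd_conv d1 d2 d3 d4)

lemma eig_cases:
  fixes a b c d :: real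
  assumes "z \<in> eigset a b c d"
  shows "(Im z = 0 \<and> (a-d)^2 + 4 * b * c \<ge> 0 \<and> (Re z)^2 - (a+d) * Re z + (a * d - b * c) = 0) \<or>
         (Im z \<noteq> 0 \<and> Re z = (a+d)/2 \<and> (a-d)^2+4 * b * c < 0)"
proof -
  define x where "x = Re z"
  define y where "y = Im z"
  have z: "z = Complex x y" by (simp add: x_def y_def)
  have e: "(complex_of_real a - z) * (complex_of_real d - z) - complex_of_real (b * c) = 0"
    using assms by (simp add: eigset_def)
  have re: "(a-x) * (d-x) - y * y - b * c = 0" using arg_cong[OF e, of Re] by (simp add: z)
  have im: "y * (2 * x-a-d) = 0" using arg_cong[OF e, of Im] by (simp add: z algebra_simps)
  show ?thesis
  proof (cases "y = 0")
    case True
    then have "x^2 - (a+d) * x + (a * d-b * c) = 0" using re by (simp add: power2_eq_square algebra_simps)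
    moreover have "(a-d)^2 + 4 * b * c = (2 * x-(a+d))^2" using re True by (simp add: power2_eq_square algebra_simps)
    ultimately show ?thesis using True by (simp add: x_def y_def)
  next
    case False
    then have x: "x = (a+d)/2" using im by simp
    have "y * y > 0" using False by (auto simp add: zero_less_mult_iff)
    then have "(a-d)^2+4 * b * c < 0" using re x by (simp add: power2_eq_square field_simps) 
    then show ?thesis using False x by (simp add: x_def y_def)
  qed
qed

lemma eigset_cong: "a = a' \<Longrightarrow> b = b' \<Longrightarrow> c = c' \<Longrightarrow> d = d' \<Longrightarrow> eigset a b c d = eigset a' b' c' d'"
  by simp

lemma quad_neg: fixes x T D :: real assumes "x^2 - T * x + D = 0" "T < 0" "D > 0" shows "x < 0"
proof (rule ccontr)
  assume "\<not> x < 0"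
  then have "x \<ge> 0" by simp
  then have "(-T) * x \<ge> 0" using assms(2) mult_nonneg_nonneg[of "-T" x] by simp
  moreover have "x^2 \<ge> 0" by simp
  ultimately show False using assms by linarith
qed

lemma quad_pos: fixes x T D :: real assumes "x^2 - T * x + D = 0" "T > 0" "D > 0" shows "x > 0"
  using quad_neg[of "-x" "-T" D] assms by (simp add: power2_eq_square)

lemma spiral_gen: assumes "(a-d)^2+4 * b * c < 0" "z \<in> eigset a b c d" shows "Im z \<noteq> 0 \<and> Re z = (a+d)/2"
  using eig_cases[OF assms(2)] assms(1) by auto

lemma real_gen: assumes "(a-d)^2+4 * b * c > 0" "z \<in> eigset a b c d"
  shows "Im z = 0 \<and> (Re z)^2 - (a+d) * Re z + (a * d - b * c) = 0"
  using eig_cases[OF assms(2)] assms(1) by auto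

lemma saddle_gen: fixes a b c d :: real assumes "b * c = 0" "a * d < 0"
  shows "(\<forall>z\<in>eigset a b c d. Im z = 0) \<and> (\<exists>z\<in>eigset a b c d. Re z < 0) \<and> (\<exists>z\<in>eigset a b c d. Re z > 0)"
proof -
  have A: "complex_of_real a \<in> eigset a b c d" "complex_of_real d \<in> eigset a b c d"
    using assms(1) by (simp_all add: eigset_def)
  have "(a < 0 \<and> d > 0) \<or> (a > 0 \<and> d < 0)" using assms(2) by (auto simp add: mult_less_0_iff)
  then have "(\<exists>z\<in>eigset a b c d. Re z < 0) \<and> (\<exists>z\<in>eigset a b c d. Re z > 0)"
    using A by force
  moreover have "\<forall>z\<in>eigset a b c d. Im z = 0"
  proof
    fix z assume "z \<in> eigset a b c d"
    from eig_cases[OF this] show "Im z = 0" using assms(1) by (auto simp: mult.assoc)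
  qed
  ultimately show ?thesis by blast
qed

lemma per: "sin (x + 2 * of_int k * pi) = sin x \<and> cos (x + 2 * of_int k * pi) = cos x"
  by (subst sin_cos_eq_iff) (auto simp: algebra_simps)

lemma stat_shift: "stationary thdot (aldot p q) (th, al + 2 * of_int k * pi) = stationary thdot (aldot p q) (th, al)"
proof -
  have "al + 2 * of_int k * pi - th = (al - th) + 2 * of_int k * pi" by simp
  then show ?thesis unfolding stationary_def thdot_def aldot_def fst_conv snd_conv
    by (simp only: per)
qed

lemma a0_facts:
  fixes p q :: real assumes "p > 0" "q > 0"
  shows "0 < arctan (sqrt (q/p)) \<and> arctan (sqrt (q/p)) < pi/2 \<and>
     p * (sin (arctan (sqrt (q/p))))^2 = q * (cos (arctan (sqrt (q/p))))^2"
proof -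
  define a where "a = arctan (sqrt (q/p))"
  have t: "tan a = sqrt (q/p)" by (simp add: a_def tan_arctan)
  have pos: "0 < a" using assms by (simp add: a_def)
  have lt: "a < pi/2" unfolding a_def by (rule arctan_ubound)
  have c: "cos a > 0" using pos lt by (intro cos_gt_zero) auto
  have "sin a = sqrt (q/p) * cos a" using t c by (simp add: tan_def field_simps)
  then have "(sin a)^2 = (q/p) * (cos a)^2" using assms by (simp add: power_mult_distrib)
  then have "p * (sin a)^2 = q * (cos a)^2" using assms by (simp add: field_simps)
  then show ?thesis using pos lt by (simp add: a_def)
qed

lemma a0_unique:
  fixes p q th :: real assumes "p > 0" "q > 0" "0 < th" "th < pi/2" "q * (cos th)^2 = p * (sin th)^2"
  shows "th = arctan (sqrt (q/p))"
proof -
  have c: "cos th > 0" using assms by (intro cos_gt_zero) auto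
  have s: "sin th > 0" using assms by (intro sin_gt_zero) auto
  have "(tan th)^2 = q/p" using assms(1,5) c by (simp add: tan_def power_divide field_simps)
  moreover have "tan th > 0" using c s by (simp add: tan_def)
  ultimately have "tan th = sqrt (q/p)" by (metis less_eq_real_def real_sqrt_unique)
  then show ?thesis using arctan_tan[of th] assms by simp
qed

lemma even_odd_int: obtains k :: int where "n = 2 * k" | k where "n = 2 * k + 1"
  by (metis evenE oddE)

lemma stat_char:
  fixes p q :: real and th al :: real
  assumes "p > 0" "q > 0" "0 \<le> th" "th \<le> pi/2" "stationary thdot (aldot p q) (th, al)"
  defines "a0 \<equiv> arctan (sqrt (q/p))"
  shows "\<exists>k::int. (th = a0 \<and> al = a0 + 2 * of_int k * pi) \<or> (th = a0 \<and> al = a0 + pi + 2 * of_int k * pi)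
     \<or> (th = 0 \<and> al = pi/2 + 2 * of_int k * pi) \<or> (th = 0 \<and> al = 3*pi/2 + 2 * of_int k * pi)
     \<or> (th = pi/2 \<and> al = 0 + 2 * of_int k * pi) \<or> (th = pi/2 \<and> al = pi + 2 * of_int k * pi)"
proof -
  have T: "3 * sin th * cos th * sin (al - th) = 0" and G: "q * cos al * cos th - p * sin al * sin th = 0"
    using assms(5) by (auto simp: stationary_def thdot_def aldot_def)
  consider "th = 0" | "th = pi/2" | "0 < th \<and> th < pi/2" using assms(3,4) by linarith
  then show ?thesis
  proof cases
    case 1
    then have "cos al = 0" using G assms(2) by simp
    then obtain n :: int where n: "al = n * pi + pi/2" by (auto simp: cos_zero_iff_int2)
    obtain k where "n = 2 * k \<or> n = 2 * k + 1" by (metis evenE oddE)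
    then show ?thesis
    proof
      assume "n = 2 * k" then show ?thesis using 1 n by (intro exI[of _ k]) (simp add: algebra_simps)
    next
      assume "n = 2 * k + 1" then show ?thesis using 1 n by (intro exI[of _ k]) (simp add: algebra_simps)
    qed
  next
    case 2
    then have "sin al = 0" using G assms(1) by (simp del: eq_divide_eq_numeral1)
    then obtain n :: int where n: "al = n * pi" by (auto simp: sin_zero_iff_int2)
    obtain k where "n = 2 * k \<or> n = 2 * k + 1" by (metis evenE oddE)
    then show ?thesis
    proof
      assume "n = 2 * k" then show ?thesis using 2 n by (intro exI[of _ k]) (simp add: algebra_simps)
    next
      assume "n = 2 * k + 1" then show ?thesis using 2 n by (intro exI[of _ k]) (simp add: algebra_simps)
    qed
  next
    case 3
    have c: "cos th > 0" using 3 by (intro cos_gt_zero) auto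
    have s: "sin th > 0" using 3 by (intro sin_gt_zero) auto
    have "sin (al - th) = 0" using T c s by simp
    then obtain n :: int where n: "al - th = n * pi" by (auto simp: sin_zero_iff_int2)
    obtain k where "n = 2 * k \<or> n = 2 * k + 1" by (metis evenE oddE)
    then show ?thesis
    proof
      assume "n = 2 * k"
      then have al: "al = th + 2 * of_int k * pi" using n by (simp add: algebra_simps)
      then have "sin al = sin th" "cos al = cos th" using per by auto
      then have "q * (cos th)^2 = p * (sin th)^2" using G by (simp add: power2_eq_square)
      then have "th = a0" unfolding a0_def using a0_unique assms(1,2) 3 by blast
      then show ?thesis using al by blast
    next
      assume "n = 2 * k + 1"
      then have al: "al = (th + pi) + 2 * of_int k * pi" using n by (simp add: algebra_simps)
      then have "sin al = - sin th" "cos al = - cos th" using per[of "th + pi" k] by auto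
      then have "q * (cos th)^2 = p * (sin th)^2" using G by (simp add: power2_eq_square)
      then have "th = a0" unfolding a0_def using a0_unique assms(1,2) 3 by blast
      then show ?thesis using al by blast
    qed
  qed
qed

theorem lemma4p4:
  fixes p q :: nat
  assumes "p > 0" and "q > 0"
  defines "a0 \<equiv> arctan (sqrt (real q / real p))"
  defines "f \<equiv> thdot" and "g \<equiv> aldot (real p) (real q)"
  defines "P0 \<equiv> (a0, a0)" and "P1 \<equiv> (a0, a0 + pi)"
  defines "Q1 \<equiv> (0, pi/2)" and "Q2 \<equiv> (0, 3*pi/2)"
  defines "Q3 \<equiv> (pi/2, 0)" and "Q4 \<equiv> (pi/2, pi)"
  shows "{P0, P1, Q1, Q2, Q3, Q4} \<subseteq> R1 \<union> R2
    \<and> (\<forall>P\<in>{P0, P1, Q1, Q2, Q3, Q4}. stationary f g P)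
    \<and> (\<forall>th al. (th, al) \<in> R1 \<union> R2 \<longrightarrow>
          (stationary f g (th, al) \<longleftrightarrow>
            (\<exists>P\<in>{P0, P1, Q1, Q2, Q3, Q4}. th = fst P \<and> (\<exists>k::int. al = snd P + 2 * of_int k * pi))))
    \<and> (p + q \<le> 17 \<longrightarrow> spiral_sink f g P0 \<and> spiral_source f g P1)
    \<and> (p + q \<ge> 18 \<longrightarrow> nodal_sink f g P0 \<and> nodal_source f g P1)
    \<and> saddle_point f g Q1 \<and> saddle_point f g Q2 \<and> saddle_point f g Q3 \<and> saddle_point f g Q4"
proof -
  have pp: "real p > 0" and qq: "real q > 0" using assms(1,2) by auto
  note A = a0_facts[OF pp qq, folded a0_def]
  have a0pos: "0 < a0" and a0lt: "a0 < pi/2" and key: "real p * (sin a0)^2 = real q * (cos a0)^2"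
    using A by auto
  have s0: "sin a0 > 0" using a0pos a0lt by (intro sin_gt_zero) auto
  have c0: "cos a0 > 0" using a0pos a0lt by (intro cos_gt_zero) auto
  have s32: "sin (3*pi/2) = -1" and c32: "cos (3*pi/2) = 0"
  proof -
    have "3*pi/2 = pi/2 + pi" by simp
    then show "sin (3*pi/2) = -1" "cos (3*pi/2) = 0" by (simp_all only: sin_periodic_pi cos_periodic_pi) simp_all
  qed
  have inR: "{P0, P1, Q1, Q2, Q3, Q4} \<subseteq> R1 \<union> R2"
    unfolding P0_def P1_def Q1_def Q2_def Q3_def Q4_def R1_def R2_def using a0pos a0lt by auto
  have st: "\<forall>P\<in>{P0, P1, Q1, Q2, Q3, Q4}. stationary f g P"
    unfolding P0_def P1_def Q1_def Q2_def Q3_def Q4_def f_def g_def stationary_def thdot_def aldot_def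
    using key s32 c32 by (simp add: power2_eq_square)
  have char: "\<forall>th al. (th, al) \<in> R1 \<union> R2 \<longrightarrow>
          (stationary f g (th, al) \<longleftrightarrow>
            (\<exists>P\<in>{P0, P1, Q1, Q2, Q3, Q4}. th = fst P \<and> (\<exists>k::int. al = snd P + 2 * of_int k * pi)))"
  proof (intro allI impI iffI)
    fix th al assume R: "(th, al) \<in> R1 \<union> R2" and S: "stationary f g (th, al)"
    have "0 \<le> th" "th \<le> pi/2" using R by (auto simp: R1_def R2_def)
    from stat_char[OF pp qq this S[unfolded f_def g_def], folded a0_def]
    show "\<exists>P\<in>{P0, P1, Q1, Q2, Q3, Q4}. th = fst P \<and> (\<exists>k::int. al = snd P + 2 * of_int k * pi)"
      unfolding P0_def P1_def Q1_def Q2_def Q3_def Q4_def by auto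
  next
    fix th al assume "\<exists>P\<in>{P0, P1, Q1, Q2, Q3, Q4}. th = fst P \<and> (\<exists>k::int. al = snd P + 2 * of_int k * pi)"
    then obtain P k where P: "P \<in> {P0, P1, Q1, Q2, Q3, Q4}" "th = fst P" "al = snd P + 2 * of_int k * pi" by blast
    have "stationary f g (fst P, snd P)" using st P(1) by auto
    then show "stationary f g (th, al)" unfolding P(2,3) f_def g_def stat_shift .
  qed
  define c where "c = sin a0 * cos a0"
  define n where "n = real p + real q"
  have cpos: "c > 0" using s0 c0 by (simp add: c_def)
  have npos: "n \<ge> 2" using assms(1,2) by (simp add: n_def)
  have ncpos: "n * c > 0" using cpos npos by simp
  have T0: "-3*c + -n*c < 0" using cpos ncpos by (smt (verit) mult_minus_left)
  have T1: "3*c + n*c > 0" using cpos ncpos by (smt (verit))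
  have J0: "jac_eigenvalues f g P0 = eigset (-3*c) (3*c) (-n*c) (-n*c)"
    unfolding f_def g_def P0_def jac c_def n_def by (rule eigset_cong; simp add: algebra_simps)
  have J1: "jac_eigenvalues f g P1 = eigset (3*c) (-3*c) (n*c) (n*c)"
    unfolding f_def g_def P1_def jac c_def n_def by (rule eigset_cong; simp add: algebra_simps)
  have D0: "(-3*c - (-n*c))^2 + 4*(3*c)*(-n*c) = c^2 * (n^2 - 18*n + 9)"
    by (simp add: power2_eq_square algebra_simps)
  have D1: "(3*c - (n*c))^2 + 4*(-3*c)*(n*c) = c^2 * (n^2 - 18*n + 9)"
    by (simp add: power2_eq_square algebra_simps)
  have det: "(-3*c)*(-n*c) - (3*c)*(-n*c) > 0" "(3*c)*(n*c) - (-3*c)*(n*c) > 0"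
    using cpos npos by (simp_all add: algebra_simps)
  have spiral: "p + q \<le> 17 \<longrightarrow> spiral_sink f g P0 \<and> spiral_source f g P1"
  proof
    assume h: "p + q \<le> 17"
    have "n \<le> 17" using h by (simp add: n_def)
    then have "(n - 1) * (17 - n) \<ge> 0" using npos by simp
    then have "n^2 - 18*n + 9 < 0" by (simp add: power2_eq_square algebra_simps)
    then have neg: "c^2 * (n^2 - 18*n + 9) < 0" using cpos by (simp add: mult_pos_neg)
    show "spiral_sink f g P0 \<and> spiral_source f g P1"
      unfolding spiral_sink_def spiral_source_def J0 J1
    proof (intro conjI ballI)
      show "stationary f g P0" "stationary f g P1" using st by auto
    next
      fix z assume z: "z \<in> eigset (-3*c) (3*c) (-n*c) (-n*c)"
      from spiral_gen[OF _ z] neg D0 have i: "Im z \<noteq> 0" and r: "Re z = (-3*c + -n*c)/2" by auto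
      have nc: "n * c > 0" using cpos npos by simp
      have "Re z = -(3*c + n*c)/2" using r by simp
      then show "Re z < 0" using cpos nc by (simp add: field_simps)
      show "Im z \<noteq> 0" by (rule i)
    next
      fix z assume z: "z \<in> eigset (3*c) (-3*c) (n*c) (n*c)"
      from spiral_gen[OF _ z] neg D1 have "Im z \<noteq> 0 \<and> Re z = (3*c + n*c)/2" by simp
      moreover have "n * c > 0" using cpos npos by simp
      ultimately show "Im z \<noteq> 0" "Re z > 0" using cpos by (simp_all add: field_simps)
    qed
  qed
  have nodal: "p + q \<ge> 18 \<longrightarrow> nodal_sink f g P0 \<and> nodal_source f g P1"
  proof
    assume h: "p + q \<ge> 18"
    have "n \<ge> 18" using h by (simp add: n_def)
    then have "n * (n - 18) \<ge> 0" by simp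
    then have "n^2 - 18*n + 9 > 0" by (simp add: power2_eq_square algebra_simps)
    then have pos: "c^2 * (n^2 - 18*n + 9) > 0" using cpos by simp
    have "\<forall>z\<in>eigset (-3*c) (3*c) (-n*c) (-n*c). Im z = 0 \<and> Re z < 0"
    proof
      fix z assume z: "z \<in> eigset (-3*c) (3*c) (-n*c) (-n*c)"
      from real_gen[OF _ z] pos D0 have "Im z = 0" and e: "(Re z)^2 - (-3*c + -n*c) * Re z + ((-3*c)*(-n*c) - (3*c)*(-n*c)) = 0"
        by auto
      have "Re z < 0" by (rule quad_neg[OF e]) (use T0 T1 det in auto)
      then show "Im z = 0 \<and> Re z < 0" using \<open>Im z = 0\<close> by simp
    qed
    moreover have "\<forall>z\<in>eigset (3*c) (-3*c) (n*c) (n*c). Im z = 0 \<and> Re z > 0"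
    proof
      fix z assume z: "z \<in> eigset (3*c) (-3*c) (n*c) (n*c)"
      from real_gen[OF _ z] pos D1 have "Im z = 0" and e: "(Re z)^2 - (3*c + n*c) * Re z + ((3*c)*(n*c) - (-3*c)*(n*c)) = 0"
        by auto
      have "Re z > 0" by (rule quad_pos[OF e]) (use T0 T1 det in auto)
      then show "Im z = 0 \<and> Re z > 0" using \<open>Im z = 0\<close> by simp
    qed
    ultimately show "nodal_sink f g P0 \<and> nodal_source f g P1"
      unfolding nodal_sink_def nodal_source_def J0 J1 using st by auto
  qed
  have JQ1: "jac_eigenvalues f g Q1 = eigset 3 0 (- real p) (- real q)"
    unfolding f_def g_def Q1_def jac by simp
  have JQ2: "jac_eigenvalues f g Q2 = eigset (-3) 0 (real p) (real q)"
    unfolding f_def g_def Q2_def jac using s32 c32 by simp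
  have JQ3: "jac_eigenvalues f g Q3 = eigset 3 0 (- real q) (- real p)"
    unfolding f_def g_def Q3_def jac by simp
  have JQ4: "jac_eigenvalues f g Q4 = eigset (-3) 0 (real q) (real p)"
    unfolding f_def g_def Q4_def jac by simp
  have sad: "saddle_point f g Q1 \<and> saddle_point f g Q2 \<and> saddle_point f g Q3 \<and> saddle_point f g Q4"
    unfolding saddle_point_def JQ1 JQ2 JQ3 JQ4 using st pp qq saddle_gen[of 0 "- real p" 3 "- real q"] saddle_gen[of 0 "real p" "-3" "real q"]
      saddle_gen[of 0 "- real q" 3 "- real p"] saddle_gen[of 0 "real q" "-3" "real p"]
    by (simp add: mult_pos_neg mult_neg_pos)
  show ?thesis using inR st char spiral nodal sad by blast
qed

end
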